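(* Let $G$ be a (not necessarily connected) graph on $n\ge1$ vertices with adjacency matrix $A$ and let $m\ge1$. Then there exist $\mu\in\mathbb{R}$, $f\in\mathbb{R}^m$, $g\in\mathbb{R}^n$ such that, with $\alpha=-2m$, \[ (J_m+\alpha I)f=\tfrac{\mu}{2}\mathbf 1,\quad (A-J_n-\alpha I)g=-\tfrac{\mu}{2}\mathbf 1,\quad \langle f,f\rangle+\langle g,g\rangle=1,\quad \langle\mathbf 1,f\rangle+\langle\mathbf 1,g\rangle=0, \] if and only if $-2m$ is an eigenvalue of $A$.
   Context: $J_k$ is the $k\times k$ all-ones matrix, $\mathbf 1$ the all-ones vector of the appropriate size, $I$ the identity. *)

theory Defs
  imports "Jordan_Normal_Form.Matrix" "Jordan_Normal_Form.Char_Poly"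
begin

definition all_ones_mat :: "nat \<Rightarrow> real mat" where
  "all_ones_mat k = mat k k (\<lambda>_. 1)"

definition ones_vec :: "nat \<Rightarrow> real vec" where
  "ones_vec k = vec k (\<lambda>_. 1)"

text \<open>A (simple, undirected, not necessarily connected) graph on the vertex set
  {0..<n} is given by a symmetric irreflexive edge relation E.\<close>
definition simple_graph :: "nat \<Rightarrow> (nat \<Rightarrow> nat \<Rightarrow> bool) \<Rightarrow> bool" where
  "simple_graph n E \<longleftrightarrow> (\<forall>i<n. \<forall>j<n. E i j \<longleftrightarrow> E j i) \<and> (\<forall>i<n. \<not> E i i)"

definition adjacency_matrix :: "nat \<Rightarrow> (nat \<Rightarrow> nat \<Rightarrow> bool) \<Rightarrow> real mat" where
  "adjacency_matrix n E = mat n n (\<lambda>(i, j). if E i j then 1 else 0)"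

end

theory Submission imports Defs begin
lemma L1: assumes "f \<in> carrier_vec m" "i < m"
  shows "((all_ones_mat m + a \<cdot>\<^sub>m 1\<^sub>m m) *\<^sub>v f) $ i = ones_vec m \<bullet> f + a * f $ i"
proof -
  have "(all_ones_mat m + a \<cdot>\<^sub>m 1\<^sub>m m) *\<^sub>v f = all_ones_mat m *\<^sub>v f + (a \<cdot>\<^sub>m 1\<^sub>m m) *\<^sub>v f"
    using assms by (intro add_mult_distrib_mat_vec) (auto simp: all_ones_mat_def)
  also have "\<dots> $ i = ones_vec m \<bullet> f + a * f $ i"
    using assms by (simp add: all_ones_mat_def ones_vec_def scalar_prod_def row_def mult.assoc if_distrib if_distribR sum.delta cong: if_cong)
  finally show ?thesis .
qed
lemma L2: assumes "g \<in> carrier_vec n" "i < n" "A \<in> carrier_mat n n"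
  shows "((A - all_ones_mat n - a \<cdot>\<^sub>m 1\<^sub>m n) *\<^sub>v g) $ i = (A *\<^sub>v g) $ i - ones_vec n \<bullet> g - a * g $ i"
proof -
  have "(A - all_ones_mat n - a \<cdot>\<^sub>m 1\<^sub>m n) *\<^sub>v g = (A - all_ones_mat n) *\<^sub>v g - (a \<cdot>\<^sub>m 1\<^sub>m n) *\<^sub>v g"
    using assms by (intro minus_mult_distrib_mat_vec) (auto simp: all_ones_mat_def)
  also have "(A - all_ones_mat n) *\<^sub>v g = A *\<^sub>v g - all_ones_mat n *\<^sub>v g"
    using assms by (intro minus_mult_distrib_mat_vec) (auto simp: all_ones_mat_def)
  finally show ?thesis
    using assms by (simp add: all_ones_mat_def ones_vec_def scalar_prod_def row_def mult.assoc if_distrib if_distribR sum.delta cong: if_cong)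
qed

lemma ones_sp: "v \<in> carrier_vec k \<Longrightarrow> ones_vec k \<bullet> v = (\<Sum>i<k. v $ i)"
  by (simp add: ones_vec_def scalar_prod_def lessThan_atLeast0)

lemma ones1: "ones_vec k \<bullet> ones_vec k = real k"
  by (simp add: ones_vec_def scalar_prod_def)

lemma sp_self: "(v::real vec) \<in> carrier_vec k \<Longrightarrow> v \<bullet> v = (\<Sum>i<k. (v $ i)^2)"
  by (simp add: scalar_prod_def lessThan_atLeast0 power2_eq_square)

lemma sp_pos: assumes "(v::real vec) \<in> carrier_vec k" "v \<noteq> 0\<^sub>v k" shows "v \<bullet> v > 0"
proof -
  obtain j where j: "j < k" "v $ j \<noteq> 0"
    using assms by (metis carrier_vecD eq_vecI index_zero_vec(1) index_zero_vec(2))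
  have "(\<Sum>i<k. (v $ i)^2) > 0"
    by (rule sum_pos2[of _ j]) (use j in auto)
  then show ?thesis using sp_self[OF assms(1)] by simp
qed

theorem lemma3p5:
  fixes n m :: nat and E :: "nat \<Rightarrow> nat \<Rightarrow> bool"
  assumes "n \<ge> 1" and "m \<ge> 1" and "simple_graph n E"
  defines "A \<equiv> adjacency_matrix n E"
  defines "\<alpha> \<equiv> - 2 * real m"
  shows "(\<exists>(\<mu>::real) (f::real vec) (g::real vec).
            f \<in> carrier_vec m \<and> g \<in> carrier_vec n \<and>
            (all_ones_mat m + \<alpha> \<cdot>\<^sub>m 1\<^sub>m m) *\<^sub>v f = (\<mu> / 2) \<cdot>\<^sub>v ones_vec m \<and>
            (A - all_ones_mat n - \<alpha> \<cdot>\<^sub>m 1\<^sub>m n) *\<^sub>v g = (- \<mu> / 2) \<cdot>\<^sub>v ones_vec n \<and>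
            f \<bullet> f + g \<bullet> g = 1 \<and>
            ones_vec m \<bullet> f + ones_vec n \<bullet> g = 0)
         \<longleftrightarrow> eigenvalue A (- 2 * real m)"
proof
  have Ac: "A \<in> carrier_mat n n" unfolding A_def adjacency_matrix_def by simp
  have mpos: "real m > 0" using assms(2) by simp
  {
    assume "\<exists>(\<mu>::real) (f::real vec) (g::real vec).
            f \<in> carrier_vec m \<and> g \<in> carrier_vec n \<and>
            (all_ones_mat m + \<alpha> \<cdot>\<^sub>m 1\<^sub>m m) *\<^sub>v f = (\<mu> / 2) \<cdot>\<^sub>v ones_vec m \<and>
            (A - all_ones_mat n - \<alpha> \<cdot>\<^sub>m 1\<^sub>m n) *\<^sub>v g = (- \<mu> / 2) \<cdot>\<^sub>v ones_vec n \<and>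
            f \<bullet> f + g \<bullet> g = 1 \<and>
            ones_vec m \<bullet> f + ones_vec n \<bullet> g = 0"
    then obtain \<mu> f g where f: "f \<in> carrier_vec m" and g: "g \<in> carrier_vec n"
      and e1: "(all_ones_mat m + \<alpha> \<cdot>\<^sub>m 1\<^sub>m m) *\<^sub>v f = (\<mu> / 2) \<cdot>\<^sub>v ones_vec m"
      and e2: "(A - all_ones_mat n - \<alpha> \<cdot>\<^sub>m 1\<^sub>m n) *\<^sub>v g = (- \<mu> / 2) \<cdot>\<^sub>v ones_vec n"
      and nn: "f \<bullet> f + g \<bullet> g = 1" and ss: "ones_vec m \<bullet> f + ones_vec n \<bullet> g = 0"
      by blast
    define Sf where "Sf = ones_vec m \<bullet> f"
    define Sg where "Sg = ones_vec n \<bullet> g"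
    have h1: "Sf + \<alpha> * f $ i = \<mu> / 2" if "i < m" for i
    proof -
      have "((all_ones_mat m + \<alpha> \<cdot>\<^sub>m 1\<^sub>m m) *\<^sub>v f) $ i = ((\<mu> / 2) \<cdot>\<^sub>v ones_vec m) $ i"
        using e1 by simp
      then show ?thesis using L1[OF f that] that by (simp add: Sf_def ones_vec_def)
    qed
    have "(\<Sum>i<m. Sf + \<alpha> * f $ i) = (\<Sum>i<m. \<mu> / 2)"
      using h1 by (intro sum.cong) auto
    hence "real m * Sf + \<alpha> * Sf = real m * \<mu> / 2"
      by (simp add: sum.distrib sum_distrib_left[symmetric] Sf_def ones_sp[OF f])
    hence "real m * (2 * Sf + \<mu>) = 0" unfolding \<alpha>_def by (simp add: algebra_simps)
    hence SfE: "Sf = - \<mu> / 2" using mpos by simp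
    have fi: "f $ i = - \<mu> / (2 * real m)" if "i < m" for i
      using h1[OF that] SfE mpos unfolding \<alpha>_def by (simp add: field_simps)
    have SgE: "Sg = \<mu> / 2" using ss SfE unfolding Sf_def Sg_def by simp
    have Ag: "A *\<^sub>v g = \<alpha> \<cdot>\<^sub>v g"
    proof (rule eq_vecI)
      fix i assume i: "i < dim_vec (\<alpha> \<cdot>\<^sub>v g)"
      hence i': "i < n" using g by simp
      have "((A - all_ones_mat n - \<alpha> \<cdot>\<^sub>m 1\<^sub>m n) *\<^sub>v g) $ i = ((- \<mu> / 2) \<cdot>\<^sub>v ones_vec n) $ i"
        using e2 by simp
      then have "(A *\<^sub>v g) $ i - Sg - \<alpha> * g $ i = - \<mu> / 2"
        using L2[OF g i' Ac] i' by (simp add: Sg_def ones_vec_def)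
      then show "(A *\<^sub>v g) $ i = (\<alpha> \<cdot>\<^sub>v g) $ i" using SgE i' g by simp
    qed (use Ac g in simp)
    have gnz: "g \<noteq> 0\<^sub>v n"
    proof
      assume g0: "g = 0\<^sub>v n"
      hence "Sg = 0" unfolding Sg_def by (simp add: ones_vec_def)
      hence "\<mu> = 0" using SgE by simp
      hence "f = 0\<^sub>v m" using fi f by (intro eq_vecI) auto
      hence "f \<bullet> f + g \<bullet> g = 0" using g0 by simp
      thus False using nn by simp
    qed
    show "eigenvalue A (- 2 * real m)"
      unfolding eigenvalue_def eigenvector_def
      using Ac g gnz Ag \<alpha>_def by auto
  }
  {
    assume "eigenvalue A (- 2 * real m)"
    then obtain v where v: "v \<in> carrier_vec n" and vnz: "v \<noteq> 0\<^sub>v n" and Av: "A *\<^sub>v v = \<alpha> \<cdot>\<^sub>v v"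
      unfolding eigenvalue_def eigenvector_def \<alpha>_def using Ac by auto
    define s where "s = ones_vec n \<bullet> v"
    define N where "N = v \<bullet> v"
    have Npos: "N > 0" using sp_pos[OF v vnz] N_def by simp
    define c where "c = 1 / sqrt (s^2 / real m + N)"
    have D: "s^2 / real m + N > 0" using Npos mpos by (simp add: add_nonneg_pos)
    have c2: "c^2 * (s^2 / real m + N) = 1" unfolding c_def using D
      by (simp add: power_divide)
    define g where "g = c \<cdot>\<^sub>v v"
    define f where "f = (- c * s / real m) \<cdot>\<^sub>v ones_vec m"
    define \<mu> where "\<mu> = 2 * c * s"
    have fc: "f \<in> carrier_vec m" unfolding f_def ones_vec_def by simp
    have gc: "g \<in> carrier_vec n" unfolding g_def using v by simp
    have Sf: "ones_vec m \<bullet> f = - c * s"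
      using mpos by (simp add: f_def ones1)
    have Sg: "ones_vec n \<bullet> g = c * s"
      unfolding g_def s_def using v by (simp add: ones_vec_def)
    have E1: "(all_ones_mat m + \<alpha> \<cdot>\<^sub>m 1\<^sub>m m) *\<^sub>v f = (\<mu> / 2) \<cdot>\<^sub>v ones_vec m"
    proof (rule eq_vecI)
      fix i assume "i < dim_vec ((\<mu> / 2) \<cdot>\<^sub>v ones_vec m)"
      hence i: "i < m" by (simp add: ones_vec_def)
      show "((all_ones_mat m + \<alpha> \<cdot>\<^sub>m 1\<^sub>m m) *\<^sub>v f) $ i = ((\<mu> / 2) \<cdot>\<^sub>v ones_vec m) $ i"
      proof -
        have a: "((all_ones_mat m + \<alpha> \<cdot>\<^sub>m 1\<^sub>m m) *\<^sub>v f) $ i = - c * s + \<alpha> * f $ i"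
          using L1[OF fc i] Sf by simp
        have b: "f $ i = - c * s / real m" using i by (simp add: f_def ones_vec_def)
        have "\<alpha> * (- c * s / real m) = 2 * c * s" unfolding \<alpha>_def using mpos by (simp add: field_simps)
        then show ?thesis using a b i unfolding \<mu>_def by (simp add: ones_vec_def)
      qed
    qed (simp add: all_ones_mat_def ones_vec_def)
    have Ag: "A *\<^sub>v g = \<alpha> \<cdot>\<^sub>v g"
      unfolding g_def using Ac v Av by (simp add: mult_mat_vec smult_smult_assoc mult.commute)
    have E2: "(A - all_ones_mat n - \<alpha> \<cdot>\<^sub>m 1\<^sub>m n) *\<^sub>v g = (- \<mu> / 2) \<cdot>\<^sub>v ones_vec n"
    proof (rule eq_vecI)
      fix i assume "i < dim_vec ((- \<mu> / 2) \<cdot>\<^sub>v ones_vec n)"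
      hence i: "i < n" by (simp add: ones_vec_def)
      have "(A *\<^sub>v g) $ i = \<alpha> * g $ i" using Ag i gc by simp
      then show "((A - all_ones_mat n - \<alpha> \<cdot>\<^sub>m 1\<^sub>m n) *\<^sub>v g) $ i = ((- \<mu> / 2) \<cdot>\<^sub>v ones_vec n) $ i"
        using L2[OF gc i Ac] Sg i unfolding \<mu>_def
        by (simp add: ones_vec_def)
    qed (use Ac in \<open>simp add: ones_vec_def\<close>)
    have ff: "f \<bullet> f = c^2 * s^2 / real m"
      using mpos by (simp add: sp_self[OF fc] f_def ones1 power2_eq_square)
    have gg: "g \<bullet> g = c^2 * N"
      unfolding g_def N_def using v by (simp add: power2_eq_square)
    have NN: "f \<bullet> f + g \<bullet> g = 1" using ff gg c2 by (simp add: field_simps)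
    show "\<exists>(\<mu>::real) (f::real vec) (g::real vec).
            f \<in> carrier_vec m \<and> g \<in> carrier_vec n \<and>
            (all_ones_mat m + \<alpha> \<cdot>\<^sub>m 1\<^sub>m m) *\<^sub>v f = (\<mu> / 2) \<cdot>\<^sub>v ones_vec m \<and>
            (A - all_ones_mat n - \<alpha> \<cdot>\<^sub>m 1\<^sub>m n) *\<^sub>v g = (- \<mu> / 2) \<cdot>\<^sub>v ones_vec n \<and>
            f \<bullet> f + g \<bullet> g = 1 \<and>
            ones_vec m \<bullet> f + ones_vec n \<bullet> g = 0"
      using fc gc E1 E2 NN Sf Sg by (intro exI[of _ \<mu>] exI[of _ f] exI[of _ g]) simp
  }
qed

end
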